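(* Let $n\ge1$, $1\le s\le n$, $A_1,\dots,A_s\subset\mathbb Z^n$ finite, $m_1+\dots+m_s=n$ nonnegative integers, and let $b:A_1\sqcup\cdots\sqcup A_s\to\mathbb R$ be a lifting in general position. Let $W\subset A_1\sqcup\cdots\sqcup A_s$ and suppose that $\Xi(W)$ contains a line. Then $V(\mathrm{conv}(A_1),m_1;\dots;\mathrm{conv}(A_s),m_s)=0$.
   Context: A lifting $b$, written $b(i,\mathbf a)$ for $\mathbf a\in A_i$, is in general position if for every subset $S$ of $\{[-\mathrm e_i,\mathbf a,b(i,\mathbf a)]:\mathbf a\in A_i\}\subset\mathbb R^s\times\mathbb R^n\times\mathbb R$ of cardinality at most $n+s+1$, either $S$ is linearly independent or $[0,\dots,0,1]$ is a linear combination of $S$. For $\boldsymbol\xi\in(\mathbb R^n)^*$, $\lambda_i(\boldsymbol\xi)=\max_{\mathbf a\in A_i}(\boldsymbol\xi(\mathbf a)-b(i,\mathbf a))$. For $W\subset A_1\sqcup\cdots\sqcup A_s$, $\Xi(W)=\{\boldsymbol\xi\in\mathbb R^n:\ \forall (i,\mathbf a),\ \mathbf a\boldsymbol\xi-\lambda_i(\boldsymbol\xi)-b(i,\mathbf a)\le0,\ \text{with equality iff }(i,\mathbf a)\in W\}$. $V(K_1,m_1;\dots;K_s,m_s)$ is the mixed volume of the $n$-tuple in which $K_i$ is repeated $m_i$ times, the mixed volume of $(\mathcal K_1,\dots,\mathcal K_n)$ being $\frac1{n!}\frac{\partial^n}{\partial t_1\cdots\partial t_n}\mathrm{Vol}(t_1\mathcal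 K_1+\cdots+t_n\mathcal K_n)$ at $t=0$. *)

theory Defs
  imports "HOL-Analysis.Analysis"
begin

definition mink_comb :: "nat \<Rightarrow> (nat \<Rightarrow> real) \<Rightarrow> (nat \<Rightarrow> 'a::real_vector set) \<Rightarrow> 'a set" where
  "mink_comb n t K = {(\<Sum>j<n. t j *\<^sub>R x j) | x. \<forall>j<n. x j \<in> K j}"

text \<open>Partial derivative in coordinate j, taken within the nonnegative reals
  (the volume polynomial is only defined for nonnegative parameters).\<close>
definition pderiv_nn :: "nat \<Rightarrow> ((nat \<Rightarrow> real) \<Rightarrow> real) \<Rightarrow> (nat \<Rightarrow> real) \<Rightarrow> real" where
  "pderiv_nn j f t = (THE D. ((\<lambda>x. f (t(j := x))) has_real_derivative D) (at (t j) within {0..}))"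

fun iter_pderiv :: "((nat \<Rightarrow> real) \<Rightarrow> real) \<Rightarrow> nat \<Rightarrow> (nat \<Rightarrow> real) \<Rightarrow> real" where
  "iter_pderiv f 0 = f"
| "iter_pderiv f (Suc k) = pderiv_nn k (iter_pderiv f k)"

definition mixed_volume :: "(nat \<Rightarrow> (real^'n) set) \<Rightarrow> real" where
  "mixed_volume K =
     iter_pderiv (\<lambda>t. measure lebesgue (mink_comb CARD('n) t K)) CARD('n) (\<lambda>_. 0) / fact CARD('n)"

definition lift_vec :: "('s::finite \<Rightarrow> real^'n \<Rightarrow> real) \<Rightarrow> 's \<Rightarrow> real^'n \<Rightarrow> (real^'s) \<times> (real^'n) \<times> real" where
  "lift_vec b i a = (- axis i 1, a, b i a)"

definition general_position ::
  "('s::finite \<Rightarrow> (real^'n) set) \<Rightarrow> ('s \<Rightarrow> real^'n \<Rightarrow> real) \<Rightarrow> bool" where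
  "general_position A b \<longleftrightarrow>
     (\<forall>S. S \<subseteq> {lift_vec b i a | i a. a \<in> A i} \<and> card S \<le> CARD('n) + CARD('s) + 1 \<longrightarrow>
          independent S \<or> ((0, 0, 1) :: (real^'s) \<times> (real^'n) \<times> real) \<in> span S)"

definition lam :: "('s \<Rightarrow> (real^'n) set) \<Rightarrow> ('s \<Rightarrow> real^'n \<Rightarrow> real) \<Rightarrow> 's \<Rightarrow> real^'n \<Rightarrow> real" where
  "lam A b i \<xi> = Max ((\<lambda>a. \<xi> \<bullet> a - b i a) ` A i)"

definition Xi :: "('s \<Rightarrow> (real^'n) set) \<Rightarrow> ('s \<Rightarrow> real^'n \<Rightarrow> real) \<Rightarrow> ('s \<times> (real^'n)) set \<Rightarrow> (real^'n) set" where
  "Xi A b W = {\<xi>. \<forall>i a. a \<in> A i \<longrightarrow>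
       a \<bullet> \<xi> - lam A b i \<xi> - b i a \<le> 0 \<and>
       (a \<bullet> \<xi> - lam A b i \<xi> - b i a = 0 \<longleftrightarrow> (i, a) \<in> W)}"

end

theory Submission
  imports Defs
begin

lemma nb: "(x::real) \<ge> 0 \<Longrightarrow> at x within {0..} \<noteq> bot"
proof -
  assume "x \<ge> 0"
  have "{x<..} \<subseteq> {0..}" using \<open>x \<ge> 0\<close> by auto
  then have "at_right x \<le> at x within {0..}" by (rule at_le)
  then show ?thesis using trivial_limit_at_right_real[of x] by (auto simp: bot_unique)
qed

lemma deriv0:
  assumes "t k \<ge> (0::real)" "\<And>x. x \<ge> 0 \<Longrightarrow> g (t(k:=x)) = 0"
  shows "pderiv_nn k g t = 0"
proof -
  have d: "((\<lambda>x. g (t(k := x))) has_real_derivative 0) (at (t k) within {0..})"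
    by (rule has_field_derivative_transform_within[where f="\<lambda>_. 0" and d=1]) (use assms in auto)
  show ?thesis unfolding pderiv_nn_def
  proof (rule the_equality)
    show "((\<lambda>x. g (t(k := x))) has_real_derivative 0) (at (t k) within {0..})" by (rule d)
    fix D assume "((\<lambda>x. g (t(k := x))) has_real_derivative D) (at (t k) within {0..})"
    then show "D = 0"
      unfolding has_real_derivative_iff_has_vector_derivative
      by (rule vector_derivative_unique_within[OF nb[OF assms(1)]]) (use d in \<open>simp add: has_real_derivative_iff_has_vector_derivative\<close>)
  qed
qed

lemma iter0:
  assumes "\<And>t. (\<forall>j. t j \<ge> 0) \<Longrightarrow> f t = 0"
  shows "(\<forall>j. t j \<ge> 0) \<Longrightarrow> iter_pderiv f k t = 0"
proof (induction k arbitrary: t)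
  case 0 then show ?case using assms by simp
next
  case (Suc k)
  show ?case unfolding iter_pderiv.simps
    by (rule deriv0) (use Suc in auto)
qed

lemma slope0:
  fixes al d K :: real
  assumes "\<And>t. al + t * d \<le> K" shows "d = 0"
proof (rule ccontr)
  assume "d \<noteq> 0"
  have "al + ((K - al + 1) / d) * d \<le> K" by (rule assms)
  with \<open>d \<noteq> 0\<close> show False by simp
qed

theorem lemma7p2:
  fixes A :: "'s::finite \<Rightarrow> (real^'n) set"
    and m :: "'s \<Rightarrow> nat"
    and b :: "'s \<Rightarrow> real^'n \<Rightarrow> real"
    and W :: "('s \<times> (real^'n)) set"
    and \<sigma> :: "nat \<Rightarrow> 's"
  assumes s_le_n: "CARD('s) \<le> CARD('n)"
    and fin: "\<And>i. finite (A i)"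
    and integral: "\<And>i a k. a \<in> A i \<Longrightarrow> a $ k \<in> \<int>"
    and m_sum: "(\<Sum>i\<in>UNIV. m i) = CARD('n)"
    and gp: "general_position A b"
    and W_sub: "W \<subseteq> Sigma UNIV A"
    and line: "\<exists>p v. v \<noteq> 0 \<and> (\<forall>t::real. p + t *\<^sub>R v \<in> Xi A b W)"
    and \<sigma>_mult: "\<And>i. card {j. j < CARD('n) \<and> \<sigma> j = i} = m i"
  shows "mixed_volume (\<lambda>j. convex hull (A (\<sigma> j))) = 0"
proof -
  obtain p v where v: "v \<noteq> 0" and pl: "\<And>t::real. p + t *\<^sub>R v \<in> Xi A b W"
    using line by blast
  have hyp: "\<exists>c. A i \<subseteq> {x. v \<bullet> x = c}" for i
  proof (cases "A i = {}")
    case True then show ?thesis by auto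
  next
    case False
    have "lam A b i p \<in> (\<lambda>a. p \<bullet> a - b i a) ` A i"
      unfolding lam_def using fin[of i] False by (intro Max_in) auto
    then obtain w where w: "w \<in> A i" "lam A b i p = p \<bullet> w - b i w" by auto
    have "p + 0 *\<^sub>R v \<in> Xi A b W" by (rule pl)
    then have "w \<bullet> p - lam A b i p - b i w = 0 \<longleftrightarrow> (i, w) \<in> W"
      using w(1) unfolding Xi_def by auto
    then have wW: "(i, w) \<in> W" using w(2) by (simp add: inner_commute)
    have "v \<bullet> a = v \<bullet> w" if a: "a \<in> A i" for a
    proof -
      have "(a - w) \<bullet> p + t * ((a - w) \<bullet> v) \<le> b i a - b i w" for t
      proof -
        have X: "p + t *\<^sub>R v \<in> Xi A b W" by (rule pl)
        have e1: "w \<bullet> (p + t *\<^sub>R v) - lam A b i (p + t *\<^sub>R v) - b i w = 0"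
          using X wW w(1) unfolding Xi_def by blast
        have e2: "a \<bullet> (p + t *\<^sub>R v) - lam A b i (p + t *\<^sub>R v) - b i a \<le> 0"
          using X a unfolding Xi_def by blast
        have q1: "(a - w) \<bullet> (p + t *\<^sub>R v) = (a - w) \<bullet> p + t * ((a - w) \<bullet> v)"
          by (simp only: inner_add_right inner_scaleR_right)
        have q2: "(a - w) \<bullet> (p + t *\<^sub>R v) = a \<bullet> (p + t *\<^sub>R v) - w \<bullet> (p + t *\<^sub>R v)"
          by (rule inner_diff_left)
        from e1 e2 q1 q2 show ?thesis by linarith
      qed
      then have "(a - w) \<bullet> v = 0" by (rule slope0)
      then show ?thesis by (metis inner_diff_right inner_commute eq_iff_diff_eq_0)
    qed
    then show ?thesis by blast
  qed
  then obtain c where c: "\<And>i. A i \<subseteq> {x. v \<bullet> x = c i}" by metis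
  have ch: "convex hull (A i) \<subseteq> {x. v \<bullet> x = c i}" for i
    by (rule hull_minimal[OF c]) (rule convex_hyperplane)
  have f0: "measure lebesgue (mink_comb CARD('n) t (\<lambda>j. convex hull (A (\<sigma> j)))) = 0" for t
  proof -
    have "mink_comb CARD('n) t (\<lambda>j. convex hull (A (\<sigma> j)))
          \<subseteq> {x. v \<bullet> x = (\<Sum>j<CARD('n). t j * c (\<sigma> j))}"
    proof
      fix y assume "y \<in> mink_comb CARD('n) t (\<lambda>j. convex hull (A (\<sigma> j)))"
      then obtain x where y: "y = (\<Sum>j<CARD('n). t j *\<^sub>R x j)"
        and x: "\<forall>j<CARD('n). x j \<in> convex hull (A (\<sigma> j))"
        unfolding mink_comb_def by blast
      have "v \<bullet> y = (\<Sum>j<CARD('n). t j * (v \<bullet> x j))"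
        unfolding y by (simp only: inner_sum_right inner_scaleR_right)
      also have "\<dots> = (\<Sum>j<CARD('n). t j * c (\<sigma> j))"
      proof (rule sum.cong[OF refl])
        fix j assume "j \<in> {..<CARD('n)}"
        then have "x j \<in> {x. v \<bullet> x = c (\<sigma> j)}" using x ch[of "\<sigma> j"] by blast
        then show "t j * (v \<bullet> x j) = t j * c (\<sigma> j)" by simp
      qed
      finally show "y \<in> {x. v \<bullet> x = (\<Sum>j<CARD('n). t j * c (\<sigma> j))}" by simp
    qed
    then have "negligible (mink_comb CARD('n) t (\<lambda>j. convex hull (A (\<sigma> j))))"
      using negligible_hyperplane[of v "\<Sum>j<CARD('n). t j * c (\<sigma> j)"] v by (rule_tac negligible_subset) auto
    then show ?thesis by (rule negligible_imp_measure0)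
  qed
  show ?thesis unfolding mixed_volume_def
    by (subst iter0[where f="\<lambda>t. measure lebesgue (mink_comb CARD('n) t (\<lambda>j. convex hull (A (\<sigma> j))))"])
       (use f0 in auto)
qed

end
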